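(* In the setup below (arbitrary gauge), assume $p(\omega|x)>0$ for all $\omega\in\checkmark$ and that $\langle F_{\omega,x}\rangle=\langle F_{\Omega,x}\rangle\langle E_{\omega,x}\rangle$ for all $\omega\in\checkmark$. Then $$\sum_{\omega\in\checkmark}p(\omega|x)I(\sigma_{x|\omega})=4\big(\langle G_{\checkmark,x}\rangle-\langle F_{\Omega,x}\rangle\langle F_{\checkmark,x}\rangle\big),$$ and, whenever $I^Q>0$, the relative loss $\kappa:=1-\sum_{\omega\in\checkmark}p(\omega|x)I(\sigma_{x|\omega})/I^Q$ equals $$\kappa=\frac{\langle G_{\times,x}\rangle-\langle F_{\Omega,x}\rangle\langle F_{\times,x}\rangle}{\langle G_{\Omega,x}\rangle-\langle F_{\Omega,x}\rangle^2}.$$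
   Context: Setup: finite-dimensional $\mathcal H_S,\mathcal H_E$; unit vectors $|\psi_i\rangle\in\mathcal H_S$, $|\phi_i^E\rangle\in\mathcal H_E$; a $C^1$ family of unitaries $U_x^{SE}$ on $\mathcal H_S\otimes\mathcal H_E$; an orthonormal basis $\{|\pi_\omega^E\rangle\}_{\omega\in\Omega}$ of $\mathcal H_E$, $\Omega=\checkmark\sqcup\times$. $|\Psi_x^{SE}\rangle=U_x^{SE}(|\psi_i\rangle\otimes|\phi_i^E\rangle)$, $M_{\omega,x}=\langle\pi_\omega^E|U_x^{SE}|\phi_i^E\rangle$, $|\tilde\psi_{x|\omega}\rangle=M_{\omega,x}|\psi_i\rangle$, $p(\omega|x)=\|\tilde\psi_{x|\omega}\|^2$, $\sigma_{x|\omega}=|\tilde\psi_{x|\omega}\rangle\langle\tilde\psi_{x|\omega}|/p(\omega|x)$. QFI of a normalized pure state: $I(|\phi_x\rangle)=4(\langle\partial_x\phi_x|\partial_x\phi_x\rangle-|\langle\phi_x|\partial_x\phi_x\rangle|^2)$; $I^Q=I(|\Psi_x^{SE}\rangle)$. Define $E_{\omega,x}=M_{\omega,x}^\dagger M_{\omega,x}$, $F_{\omega,x}=i\,\partial_xM_{\omega,x}^\dagger M_{\omega,x}$, $G_{\omega,x}=\partial_xM_{\omega,x}^\dagger\partial_xM_{\omega,x}$, and for $S\subseteq\Omega$, $X_{S,x}=\sum_{\omega\in S}X_{\omega,x}$. $\langle A\rangle=\langle\psi_i|A|\psi_i\rangle$. *)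

theory Defs
  imports "HOL-Analysis.Analysis"
begin

text \<open>Finite-dimensional Hilbert spaces are modelled as complex^'n for finite index types;
  H_S = complex^'s, H_E = complex^'e, H_S (x) H_E = complex^('s \<times> 'e).
  Operators are matrices complex^'n^'m acting by *v.\<close>

definition cinner :: "complex^'n \<Rightarrow> complex^'n \<Rightarrow> complex" where
  "cinner u v = (\<Sum>i\<in>UNIV. cnj (u$i) * v$i)"

definition cadj :: "complex^'n^'m \<Rightarrow> complex^'m^'n" where
  "cadj A = (\<chi> i j. cnj (A$j$i))"

definition unitary_mat :: "complex^'n^'n \<Rightarrow> bool" where
  "unitary_mat A \<longleftrightarrow> cadj A ** A = mat 1 \<and> A ** cadj A = mat 1"

definition orthonormal_basis :: "('w \<Rightarrow> complex^'e) \<Rightarrow> bool" where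
  "orthonormal_basis b \<longleftrightarrow>
     (\<forall>a c. cinner (b a) (b c) = (if a = c then 1 else 0)) \<and>
     (\<forall>v. \<exists>k. v = (\<Sum>w\<in>UNIV. k w *s b w))"

definition tensor_vec :: "complex^'s \<Rightarrow> complex^'e \<Rightarrow> complex^('s \<times> 'e)" where
  "tensor_vec u v = (\<chi> ij. u$(fst ij) * v$(snd ij))"

text \<open>QFI of a (normalized) pure-state family: I = 4(<d phi|d phi> - |<phi|d phi>|^2).\<close>
definition pure_qfi :: "(real \<Rightarrow> complex^'n) \<Rightarrow> real \<Rightarrow> real" where
  "pure_qfi \<phi> x =
     (let d = vector_derivative \<phi> (at x) in 4 * ((norm d)^2 - (cmod (cinner (\<phi> x) d))^2))"

text \<open>M_{w,x} = <pi_w| U_x |phi_i^E>, an operator on H_S.\<close>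
definition kraus :: "(real \<Rightarrow> complex^('s \<times> 'e)^('s \<times> 'e)) \<Rightarrow> ('w \<Rightarrow> complex^'e) \<Rightarrow> complex^'e
     \<Rightarrow> 'w \<Rightarrow> real \<Rightarrow> complex^'s^'s" where
  "kraus U \<pi> \<phi>E w t =
     (\<chi> s s'. \<Sum>e\<in>UNIV. \<Sum>e'\<in>UNIV. cnj (\<pi> w $ e) * U t $ (s, e) $ (s', e') * \<phi>E $ e')"

definition dkraus where
  "dkraus U \<pi> \<phi>E w x = vector_derivative (\<lambda>t. kraus U \<pi> \<phi>E w t) (at x)"

definition outcome_prob where
  "outcome_prob U \<pi> \<phi>E \<psi> w t = (norm (kraus U \<pi> \<phi>E w t *v \<psi>))^2"

text \<open>Normalized vector representative of sigma_{x|w} = |psi~><psi~| / p(w|x).\<close>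
definition cond_state where
  "cond_state U \<pi> \<phi>E \<psi> w t =
     complex_of_real (1 / sqrt (outcome_prob U \<pi> \<phi>E \<psi> w t)) *s (kraus U \<pi> \<phi>E w t *v \<psi>)"

definition Eop where "Eop U \<pi> \<phi>E w x = cadj (kraus U \<pi> \<phi>E w x) ** kraus U \<pi> \<phi>E w x"
definition Fop where "Fop U \<pi> \<phi>E w x = (\<chi> i j. \<i> * (cadj (dkraus U \<pi> \<phi>E w x) ** kraus U \<pi> \<phi>E w x) $ i $ j)"
definition Gop where "Gop U \<pi> \<phi>E w x = cadj (dkraus U \<pi> \<phi>E w x) ** dkraus U \<pi> \<phi>E w x"

definition expect :: "complex^'s \<Rightarrow> complex^'s^'s \<Rightarrow> complex" where
  "expect \<psi> A = cinner \<psi> (A *v \<psi>)"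

end

theory Submission
  imports Defs
begin


lemma cinner_Re: "Re (cinner u v) = inner u v"
  unfolding cinner_def inner_vec_def inner_complex_def by (simp add: Re_sum)

lemma cinner_cnj: "cinner v u = cnj (cinner u v)"
  unfolding cinner_def by (simp add: mult.commute)

lemma cinner_self: "cinner v v = complex_of_real (norm v ^ 2)"
proof -
  have "Im (cinner v v) = 0" unfolding cinner_def by (simp add: Im_sum algebra_simps)
  moreover have "Re (cinner v v) = norm v ^ 2" by (simp add: cinner_Re power2_norm_eq_inner)
  ultimately show ?thesis by (simp add: complex_eq_iff)
qed

lemma cinner_add_right: "cinner u (v + w) = cinner u v + cinner u w"
  unfolding cinner_def by (simp add: algebra_simps sum.distrib)
lemma cinner_add_left: "cinner (v + w) u = cinner v u + cinner w u"
  unfolding cinner_def by (simp add: algebra_simps sum.distrib)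
lemma vec_scaleR_c: "(r *\<^sub>R (v::complex^'n)) $ i = of_real r * v $ i"
  unfolding vector_scaleR_component by (rule scaleR_conv_of_real)

lemma cinner_diff_right: "cinner u (v - w) = cinner u v - cinner u w"
  unfolding cinner_def by (simp add: algebra_simps sum_subtractf)

lemma cinner_scaleR_right: "cinner u (r *\<^sub>R v) = of_real r * cinner u v"
  unfolding cinner_def by (simp add: vec_scaleR_c sum_distrib_left algebra_simps) (simp add: scaleR_conv_of_real)
lemma cinner_scaleR_left: "cinner (r *\<^sub>R v) u = of_real r * cinner v u"
  unfolding cinner_def by (simp add: vec_scaleR_c sum_distrib_left algebra_simps) (simp add: scaleR_conv_of_real)
lemma cinner_sum_right: "cinner u (\<Sum>w\<in>S. f w) = (\<Sum>w\<in>S. cinner u (f w))"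
  unfolding cinner_def by (simp add: sum_distrib_left sum_component) (rule sum.swap)

lemma cinner_adj: "cinner u (cadj A *v v) = cinner (A *v u) v"
  unfolding cinner_def cadj_def matrix_vector_mult_def
  by (simp add: sum_distrib_left sum_distrib_right algebra_simps cnj_sum) (rule sum.swap)

lemma expect_sum: "finite S \<Longrightarrow> expect \<psi> (\<Sum>w\<in>S. A w) = (\<Sum>w\<in>S. expect \<psi> (A w))"
  unfolding expect_def
  by (induction S rule: finite_induct) (simp_all add: matrix_vector_mult_add_rdistrib cinner_add_right,
     simp add: cinner_def matrix_vector_mult_def)

lemma cinner_smult_right: "cinner u (c *s v) = c * cinner u v"
  unfolding cinner_def by (simp add: sum_distrib_left algebra_simps)

lemma expect_E: "expect \<psi> (cadj M ** M) = cinner (M *v \<psi>) (M *v \<psi>)"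
  unfolding expect_def by (simp add: matrix_vector_mul_assoc[symmetric] cinner_adj)

lemma expect_scal: "expect \<psi> (\<chi> i j. c * B $ i $ j) = c * expect \<psi> B"
  unfolding expect_def cinner_def matrix_vector_mult_def
  by (simp add: sum_distrib_left algebra_simps)

lemma parseval:
  fixes \<pi> :: "'w::finite \<Rightarrow> complex^'e"
  assumes "orthonormal_basis \<pi>"
  shows "(\<Sum>w\<in>UNIV. cnj (cinner (\<pi> w) u) * cinner (\<pi> w) v) = cinner u v"
proof -
  from assms obtain k where v: "v = (\<Sum>w\<in>UNIV. k w *s \<pi> w)" unfolding orthonormal_basis_def by blast
  have on: "\<And>a c. cinner (\<pi> a) (\<pi> c) = (if a = c then 1 else 0)" using assms unfolding orthonormal_basis_def by blast
  have kw: "cinner (\<pi> w) v = k w" for w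
    unfolding v cinner_sum_right cinner_smult_right on by (simp add: if_distrib sum.delta sum.delta' cong: if_cong)
  show ?thesis unfolding kw
    by (simp add: v cinner_sum_right cinner_smult_right cinner_cnj[of u] mult.commute)
qed

definition Lw :: "('w \<Rightarrow> complex^'e) \<Rightarrow> 'w \<Rightarrow> complex^('s\<times>'e) \<Rightarrow> complex^'s" where
  "Lw \<pi> w \<Phi> = (\<chi> s. \<Sum>e\<in>UNIV. cnj (\<pi> w $ e) * \<Phi> $ (s,e))"

lemma Lw_row: "Lw \<pi> w \<Phi> $ s = cinner (\<pi> w) (\<chi> e. \<Phi> $ (s,e))"
  unfolding Lw_def cinner_def by simp

lemma sum_pairs: "(\<Sum>p\<in>(UNIV::('a::finite\<times>'b::finite) set). f p) = (\<Sum>a\<in>UNIV. \<Sum>b\<in>UNIV. f (a,b))"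
  by (simp add: UNIV_Times_UNIV[symmetric] sum.cartesian_product del: UNIV_Times_UNIV)

lemma pars_tensor:
  fixes \<pi> :: "'w::finite \<Rightarrow> complex^'e"
  assumes "orthonormal_basis \<pi>"
  shows "cinner \<Phi> \<Theta> = (\<Sum>w\<in>UNIV. cinner (Lw \<pi> w \<Phi>) (Lw \<pi> w \<Theta>))"
proof -
  have "cinner \<Phi> \<Theta> = (\<Sum>s\<in>UNIV. cinner (\<chi> e. \<Phi> $ (s,e)) (\<chi> e. \<Theta> $ (s,e)))"
    unfolding cinner_def by (subst sum_pairs) simp
  also have "\<dots> = (\<Sum>s\<in>UNIV. \<Sum>w\<in>UNIV. cnj (Lw \<pi> w \<Phi> $ s) * Lw \<pi> w \<Theta> $ s)"
    unfolding Lw_row parseval[OF assms] ..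
  also have "\<dots> = (\<Sum>w\<in>UNIV. cinner (Lw \<pi> w \<Phi>) (Lw \<pi> w \<Theta>))"
    unfolding cinner_def by (rule sum.swap)
  finally show ?thesis .
qed

definition KO :: "('w \<Rightarrow> complex^'e) \<Rightarrow> complex^'e \<Rightarrow> 'w \<Rightarrow> complex^('s \<times> 'e)^('s \<times> 'e) \<Rightarrow> complex^'s^'s" where
  "KO \<pi> \<phi>E w V = (\<chi> s s'. \<Sum>e\<in>UNIV. \<Sum>e'\<in>UNIV. cnj (\<pi> w $ e) * V $ (s, e) $ (s', e') * \<phi>E $ e')"

lemma kraus_KO: "kraus U \<pi> \<phi>E w t = KO \<pi> \<phi>E w (U t)"
  unfolding kraus_def KO_def ..

lemma KO_Lw: "KO \<pi> \<phi>E w V *v \<psi> = Lw \<pi> w (V *v tensor_vec \<psi> \<phi>E)"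
proof -
  have "(KO \<pi> \<phi>E w V *v \<psi>) $ s = Lw \<pi> w (V *v tensor_vec \<psi> \<phi>E) $ s" for s
  proof -
    have "(KO \<pi> \<phi>E w V *v \<psi>) $ s = (\<Sum>s'\<in>UNIV. \<Sum>e\<in>UNIV. \<Sum>e'\<in>UNIV. cnj (\<pi> w $ e) * V $ (s, e) $ (s', e') * \<phi>E $ e' * \<psi> $ s')"
      unfolding KO_def matrix_vector_mult_def by (simp add: sum_distrib_right)
    also have "\<dots> = (\<Sum>e\<in>UNIV. \<Sum>s'\<in>UNIV. \<Sum>e'\<in>UNIV. cnj (\<pi> w $ e) * V $ (s, e) $ (s', e') * \<phi>E $ e' * \<psi> $ s')"
      by (rule sum.swap)
    also have "\<dots> = Lw \<pi> w (V *v tensor_vec \<psi> \<phi>E) $ s"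
      unfolding Lw_def matrix_vector_mult_def tensor_vec_def
      by (simp add: sum_pairs sum_distrib_left algebra_simps)
    finally show ?thesis .
  qed
  then show ?thesis by (simp add: vec_eq_iff)
qed



lemma qfi_scaled:
  fixes a :: "real \<Rightarrow> complex^'n"
  assumes da: "(a has_vector_derivative b) (at x)" and ax: "a x \<noteq> 0"
  shows "norm (a x)^2 * pure_qfi (\<lambda>t. (1 / sqrt (norm (a t)^2)) *\<^sub>R a t) x
         = 4 * (norm b ^2 - cmod (cinner (a x) b)^2 / norm (a x)^2)"
proof -
  define q where "q t = inner (a t) (a t)" for t
  define r where "r = inner (a x) b"
  define s where "s = sqrt (q x)"
  define z where "z = cinner (a x) b"
  have qx: "q x = norm (a x)^2" unfolding q_def by (simp add: power2_norm_eq_inner)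
  have qpos: "q x > 0" using ax qx by simp
  have spos: "s > 0" using qpos s_def by simp
  have s2: "s^2 = q x" using qpos s_def by simp
  have dq0: "(q has_vector_derivative (inner (a x) b + inner b (a x))) (at x)"
    unfolding q_def using bounded_bilinear.has_vector_derivative[OF bounded_bilinear_inner da da] .
  have dq: "(q has_real_derivative 2 * r) (at x)"
    using dq0 unfolding has_real_derivative_iff_has_vector_derivative r_def by (simp add: inner_commute)
  define c' where "c' = - r / (s^3)"
  have dc: "((\<lambda>t. 1 / sqrt (q t)) has_real_derivative c') (at x)"
  proof -
    have d1: "((\<lambda>t. sqrt (q t)) has_real_derivative (inverse (sqrt (q x)) / 2 * (2*r))) (at x)"
      by (rule DERIV_chain2[OF DERIV_real_sqrt[OF qpos] dq])
    have d2: "((\<lambda>t. inverse (sqrt (q t))) has_real_derivative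
        (- ((inverse (sqrt (q x)) / 2 * (2*r)) * inverse ((sqrt (q x)) ^ Suc (Suc 0))))) (at x)"
      by (rule DERIV_inverse_fun[OF d1]) (use qpos in simp)
    have e: "- ((inverse (sqrt (q x)) / 2 * (2*r)) * inverse ((sqrt (q x)) ^ Suc (Suc 0))) = c'"
      unfolding c'_def s_def[symmetric] using spos by (simp add: field_simps power3_eq_cube)
    show ?thesis using d2 unfolding e by (simp add: divide_inverse)
  qed
  have eqf: "(\<lambda>t. (1 / sqrt (norm (a t)^2)) *\<^sub>R a t) = (\<lambda>t. (1 / sqrt (q t)) *\<^sub>R a t)"
    unfolding q_def by (simp add: power2_norm_eq_inner)
  define d where "d = (1 / s) *\<^sub>R b + c' *\<^sub>R a x"
  have dsig: "((\<lambda>t. (1 / sqrt (q t)) *\<^sub>R a t) has_vector_derivative d) (at x)"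
    unfolding d_def s_def
    using has_vector_derivative_scaleR[OF dc da] .
  have vd: "vector_derivative (\<lambda>t. (1 / sqrt (q t)) *\<^sub>R a t) (at x) = d"
    using vector_derivative_at[OF dsig] .
  have nb: "norm d ^2 = (norm b)^2 / s^2 + 2 * (1/s) * c' * r + c'^2 * q x"
    unfolding d_def power2_norm_eq_inner q_def r_def
    by (simp add: inner_add_left inner_add_right inner_commute algebra_simps power2_eq_square)
  have nb2: "norm d ^2 = (norm b)^2 / s^2 - r^2 / s^4"
    unfolding nb c'_def s2[symmetric] using spos by (simp add: field_simps power2_eq_square power3_eq_cube power4_eq_xxxx)
  have ci: "cinner ((1 / s) *\<^sub>R a x) d = (z - of_real r) / of_real (s^2)"
  proof -
    have "cinner ((1 / s) *\<^sub>R a x) ((1 / s) *\<^sub>R b + c' *\<^sub>R a x)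
       = of_real (1/s) * (of_real (1/s) * z + of_real c' * of_real (q x))"
      by (simp add: cinner_add_right cinner_scaleR_left cinner_scaleR_right cinner_self qx z_def add_divide_distrib)
    also have "\<dots> = (z - of_real r) / of_real (s^2)"
      unfolding c'_def s2[symmetric] using spos
      by (simp add: field_simps power3_eq_cube power2_eq_square)
    finally show ?thesis unfolding d_def .
  qed
  have rz: "Re z = r" unfolding z_def r_def by (simp add: cinner_Re)
  have cm: "cmod ((z - of_real r) / of_real (s^2)) ^2 = (Im z)^2 / s^4"
    using spos rz by (simp add: norm_divide cmod_def power_divide)
  have cz: "cmod z ^2 = r^2 + (Im z)^2" using rz by (simp add: cmod_def)
  show ?thesis
    unfolding eqf pure_qfi_def Let_def vd s_def[symmetric] unfolding ci cm z_def[symmetric] cz qx[symmetric] s2[symmetric] nb2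
    using spos by (simp add: field_simps power2_eq_square power4_eq_xxxx)
qed


lemma linear_mv: "linear (\<lambda>V::complex^'n^'m. V *v v)"
proof (rule linearI)
  show "(b1 + b2) *v v = b1 *v v + b2 *v v" for b1 b2 :: "complex^'n^'m"
    by (simp add: matrix_vector_mult_add_rdistrib)
  show "(r *\<^sub>R b) *v v = r *\<^sub>R (b *v v)" for r and b :: "complex^'n^'m"
    unfolding vec_eq_iff matrix_vector_mult_def
    by (simp add: vector_scaleR_component scaleR_sum_right)
qed
lemma bl_mv: "bounded_linear (\<lambda>V::complex^'n::finite^'m::finite. V *v v)"
  using linear_mv linear_conv_bounded_linear by blast
lemma mat_scaleR_c: "(r *\<^sub>R (V::complex^'n^'m)) $ i $ j = of_real r * V $ i $ j"
  unfolding vector_scaleR_component by (rule scaleR_conv_of_real)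

lemma linear_KO: "linear (KO \<pi> \<phi>E w :: complex^('s::finite \<times> 'e::finite)^('s \<times> 'e) \<Rightarrow> _)"
proof (rule linearI)
  show "KO \<pi> \<phi>E w (b1 + b2) = KO \<pi> \<phi>E w b1 + KO \<pi> \<phi>E w b2" for b1 b2
    unfolding vec_eq_iff KO_def by (simp add: distrib_left distrib_right sum.distrib)
  show "KO \<pi> \<phi>E w (r *\<^sub>R b) = r *\<^sub>R KO \<pi> \<phi>E w b" for r b
    unfolding vec_eq_iff KO_def mat_scaleR_c vec_lambda_beta
    by (simp add: sum_distrib_left mult.assoc mult.left_commute[of "complex_of_real r"])
qed

lemma bl_KO: "bounded_linear (KO \<pi> \<phi>E w :: complex^('s::finite \<times> 'e::finite)^('s \<times> 'e) \<Rightarrow> _)"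
  using linear_KO unfolding linear_conv_bounded_linear .

lemma expect_adj: "expect \<psi> (cadj A ** B) = cinner (A *v \<psi>) (B *v \<psi>)"
  unfolding expect_def by (simp add: matrix_vector_mul_assoc[symmetric] cinner_adj)

lemma unitary_norm:
  assumes "unitary_mat V" shows "norm (V *v v) = norm v"
proof -
  have "cinner (V *v v) (V *v v) = cinner v v"
    using assms unfolding unitary_mat_def
    by (metis cinner_adj matrix_vector_mul_assoc matrix_vector_mul_lid)
  then have "complex_of_real (norm (V *v v) ^2) = complex_of_real (norm v ^2)" unfolding cinner_self .
  then have "norm (V *v v) ^2 = norm v ^2" by (simp only: of_real_eq_iff)
  then show ?thesis by (simp add: power2_eq_iff_nonneg)
qed

lemma norm_tensor: "norm (tensor_vec \<psi> \<phi>) = norm \<psi> * norm \<phi>"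
proof -
  have "cinner (tensor_vec \<psi> \<phi>) (tensor_vec \<psi> \<phi>) = cinner \<psi> \<psi> * cinner \<phi> \<phi>"
  proof -
    have "cinner (tensor_vec \<psi> \<phi>) (tensor_vec \<psi> \<phi>) = (\<Sum>s\<in>UNIV. \<Sum>e\<in>UNIV. (cnj (\<psi>$s) * \<psi>$s) * (cnj (\<phi>$e) * \<phi>$e))"
      unfolding cinner_def tensor_vec_def by (simp add: sum_pairs mult_ac)
    also have "\<dots> = cinner \<psi> \<psi> * cinner \<phi> \<phi>"
      unfolding cinner_def by (simp add: sum_product)
    finally show ?thesis .
  qed
  then have "complex_of_real (norm (tensor_vec \<psi> \<phi>) ^2) = complex_of_real (norm \<psi> ^2) * complex_of_real (norm \<phi> ^2)"
    unfolding cinner_self .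
  then have "norm (tensor_vec \<psi> \<phi>) ^2 = (norm \<psi> * norm \<phi>)^2"
    unfolding of_real_mult[symmetric] of_real_eq_iff power_mult_distrib .
  then show ?thesis by (simp add: power2_eq_iff_nonneg)
qed

lemma scal_of_real: "complex_of_real c *s (v::complex^'n) = c *\<^sub>R v"
  unfolding vec_eq_iff vec_scaleR_c by simp

lemma const_norm_deriv:
  fixes \<Psi> :: "real \<Rightarrow> complex^'n"
  assumes d: "(\<Psi> has_vector_derivative d') (at x)" and n: "\<And>t. norm (\<Psi> t) = 1"
  shows "Re (cinner (\<Psi> x) d') = 0"
proof -
  have dq0: "((\<lambda>t. inner (\<Psi> t) (\<Psi> t)) has_vector_derivative (inner (\<Psi> x) d' + inner d' (\<Psi> x))) (at x)"
    using bounded_bilinear.has_vector_derivative[OF bounded_bilinear_inner d d] .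
  have eq: "(\<lambda>t. inner (\<Psi> t) (\<Psi> t)) = (\<lambda>t. 1)"
    using n by (simp add: power2_norm_eq_inner[symmetric])
  have "inner (\<Psi> x) d' + inner d' (\<Psi> x) = 0"
    using vector_derivative_at[OF dq0] unfolding eq by simp
  then show ?thesis by (simp add: cinner_Re inner_commute)
qed



theorem mainTheorem4:
  fixes U :: "real \<Rightarrow> complex^('s::finite \<times> 'e::finite)^('s \<times> 'e)"
    and \<pi> :: "'w::finite \<Rightarrow> complex^'e"
    and \<psi> :: "complex^'s" and \<phi>E :: "complex^'e"
    and Ck :: "'w set" and x :: real
  assumes unit_psi: "norm \<psi> = 1" and unit_phi: "norm \<phi>E = 1"
    and unitary: "\<forall>t. unitary_mat (U t)"
    and C1_diff: "\<forall>t. U differentiable (at t)"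
    and C1_cont: "continuous_on UNIV (\<lambda>t. vector_derivative U (at t))"
    and onb: "orthonormal_basis \<pi>"
    and pos: "\<forall>w\<in>Ck. outcome_prob U \<pi> \<phi>E \<psi> w x > 0"
    and Fcond: "\<forall>w\<in>Ck. expect \<psi> (Fop U \<pi> \<phi>E w x)
                   = expect \<psi> (\<Sum>v\<in>UNIV. Fop U \<pi> \<phi>E v x) * expect \<psi> (Eop U \<pi> \<phi>E w x)"
  shows "complex_of_real (\<Sum>w\<in>Ck. outcome_prob U \<pi> \<phi>E \<psi> w x * pure_qfi (cond_state U \<pi> \<phi>E \<psi> w) x)
           = 4 * (expect \<psi> (\<Sum>w\<in>Ck. Gop U \<pi> \<phi>E w x)
                  - expect \<psi> (\<Sum>v\<in>UNIV. Fop U \<pi> \<phi>E v x) * expect \<psi> (\<Sum>w\<in>Ck. Fop U \<pi> \<phi>E w x))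
       \<and> (pure_qfi (\<lambda>t. U t *v tensor_vec \<psi> \<phi>E) x > 0 \<longrightarrow>
           complex_of_real (1 - (\<Sum>w\<in>Ck. outcome_prob U \<pi> \<phi>E \<psi> w x * pure_qfi (cond_state U \<pi> \<phi>E \<psi> w) x)
                                 / pure_qfi (\<lambda>t. U t *v tensor_vec \<psi> \<phi>E) x)
           = (expect \<psi> (\<Sum>w\<in>-Ck. Gop U \<pi> \<phi>E w x)
                - expect \<psi> (\<Sum>v\<in>UNIV. Fop U \<pi> \<phi>E v x) * expect \<psi> (\<Sum>w\<in>-Ck. Fop U \<pi> \<phi>E w x))
             / (expect \<psi> (\<Sum>v\<in>UNIV. Gop U \<pi> \<phi>E v x) - (expect \<psi> (\<Sum>v\<in>UNIV. Fop U \<pi> \<phi>E v x))^2))"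
proof -
  define U' where "U' = vector_derivative U (at x)"
  have dU: "(U has_vector_derivative U') (at x)"
    using C1_diff unfolding U'_def using vector_derivative_works by blast
  define v0 where "v0 = tensor_vec \<psi> \<phi>E"
  define Psi where "Psi t = U t *v v0" for t
  define Psi' where "Psi' = U' *v v0"
  have dPsi: "(Psi has_vector_derivative Psi') (at x)"
    unfolding Psi_def Psi'_def using bounded_linear.has_vector_derivative[OF bl_mv dU] .
  have nPsi: "norm (Psi t) = 1" for t
    unfolding Psi_def v0_def by (simp add: unitary_norm[OF unitary[rule_format]] norm_tensor unit_psi unit_phi)
  define zz where "zz = cinner (Psi x) Psi'"
  have Rezz: "Re zz = 0" unfolding zz_def using const_norm_deriv[OF dPsi nPsi] .
  define a where "a w t = kraus U \<pi> \<phi>E w t *v \<psi>" for w t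
  define b where "b w = dkraus U \<pi> \<phi>E w x *v \<psi>" for w
  have dkr: "dkraus U \<pi> \<phi>E w x = KO \<pi> \<phi>E w U'" for w
  proof -
    have "((\<lambda>t. kraus U \<pi> \<phi>E w t) has_vector_derivative KO \<pi> \<phi>E w U') (at x)"
      unfolding kraus_KO using bounded_linear.has_vector_derivative[OF bl_KO dU] .
    then show ?thesis unfolding dkraus_def by (rule vector_derivative_at)
  qed
  have da: "(a w has_vector_derivative b w) (at x)" for w
  proof -
    have "((\<lambda>t. kraus U \<pi> \<phi>E w t) has_vector_derivative KO \<pi> \<phi>E w U') (at x)"
      unfolding kraus_KO using bounded_linear.has_vector_derivative[OF bl_KO dU] .
    from bounded_linear.has_vector_derivative[OF bl_mv this]
    show ?thesis unfolding a_def b_def dkr .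
  qed
  have aL: "a w x = Lw \<pi> w (Psi x)" for w
    unfolding a_def Psi_def v0_def kraus_KO KO_Lw ..
  have bL: "b w = Lw \<pi> w Psi'" for w
    unfolding b_def Psi'_def v0_def dkr KO_Lw ..
  have pw: "outcome_prob U \<pi> \<phi>E \<psi> w x = norm (a w x)^2" for w
    unfolding outcome_prob_def a_def ..
  have cs: "cond_state U \<pi> \<phi>E \<psi> w = (\<lambda>t. (1 / sqrt (norm (a w t)^2)) *\<^sub>R a w t)" for w
    unfolding cond_state_def outcome_prob_def a_def scal_of_real ..
  have Ew: "expect \<psi> (Eop U \<pi> \<phi>E w x) = complex_of_real (norm (a w x)^2)" for w
    unfolding Eop_def expect_adj a_def cinner_self ..
  have Fw: "expect \<psi> (Fop U \<pi> \<phi>E w x) = \<i> * cinner (b w) (a w x)" for w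
    unfolding Fop_def expect_scal expect_adj a_def b_def ..
  have Gw: "expect \<psi> (Gop U \<pi> \<phi>E w x) = complex_of_real (norm (b w)^2)" for w
    unfolding Gop_def expect_adj b_def cinner_self ..
  define FF where "FF = expect \<psi> (\<Sum>v\<in>UNIV. Fop U \<pi> \<phi>E v x)"
  have FF: "FF = complex_of_real (Im zz)"
  proof -
    have "FF = \<i> * (\<Sum>v\<in>UNIV. cinner (b v) (a v x))"
      unfolding FF_def by (simp add: expect_sum Fw sum_distrib_left)
    also have "\<dots> = \<i> * cinner Psi' (Psi x)"
      unfolding aL bL pars_tensor[OF onb, symmetric] ..
    also have "\<dots> = \<i> * cnj zz" unfolding zz_def cinner_cnj[of Psi'] ..
    also have "\<dots> = complex_of_real (Im zz)" using Rezz by (simp add: complex_eq_iff)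
    finally show ?thesis .
  qed
  have GG: "expect \<psi> (\<Sum>v\<in>UNIV. Gop U \<pi> \<phi>E v x) = complex_of_real (norm Psi' ^2)"
  proof -
    have "expect \<psi> (\<Sum>v\<in>UNIV. Gop U \<pi> \<phi>E v x) = (\<Sum>v\<in>UNIV. cinner (b v) (b v))"
      by (simp add: expect_sum Gw cinner_self)
    also have "\<dots> = cinner Psi' Psi'" unfolding bL pars_tensor[OF onb, symmetric] ..
    finally show ?thesis unfolding cinner_self .
  qed
  have termw: "complex_of_real (outcome_prob U \<pi> \<phi>E \<psi> w x * pure_qfi (cond_state U \<pi> \<phi>E \<psi> w) x)
      = 4 * (expect \<psi> (Gop U \<pi> \<phi>E w x) - FF * expect \<psi> (Fop U \<pi> \<phi>E w x))" if w: "w \<in> Ck" for w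
  proof -
    define p where "p = norm (a w x)^2"
    have ppos: "p > 0" using pos w unfolding p_def pw by auto
    then have anz: "a w x \<noteq> 0" unfolding p_def by auto
    have fc: "\<i> * cinner (b w) (a w x) = complex_of_real (Im zz * p)"
      using Fcond w unfolding Fw[symmetric] FF_def[symmetric] FF Ew p_def by simp
    have cm: "cmod (cinner (a w x) (b w)) ^2 = (Im zz * p)^2"
    proof -
      have "cmod (cinner (a w x) (b w)) = cmod (\<i> * cinner (b w) (a w x))"
        by (simp add: cinner_cnj[of "a w x"] norm_mult)
      also have "\<dots> = \<bar>Im zz * p\<bar>" unfolding fc norm_of_real ..
      finally show ?thesis by simp
    qed
    have "p * pure_qfi (cond_state U \<pi> \<phi>E \<psi> w) x = 4 * (norm (b w) ^2 - (Im zz)^2 * p)"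
      unfolding cs p_def qfi_scaled[OF da anz] cm[unfolded p_def]
      using ppos[unfolded p_def] by (simp add: field_simps power2_eq_square)
    then have "complex_of_real (p * pure_qfi (cond_state U \<pi> \<phi>E \<psi> w) x) = complex_of_real (4 * (norm (b w) ^2 - (Im zz)^2 * p))"
      by simp
    then show ?thesis unfolding pw unfolding p_def[symmetric] Gw Fw fc FF
      by (simp add: power2_eq_square algebra_simps)
  qed
  have part1: "complex_of_real (\<Sum>w\<in>Ck. outcome_prob U \<pi> \<phi>E \<psi> w x * pure_qfi (cond_state U \<pi> \<phi>E \<psi> w) x)
           = 4 * (expect \<psi> (\<Sum>w\<in>Ck. Gop U \<pi> \<phi>E w x) - FF * expect \<psi> (\<Sum>w\<in>Ck. Fop U \<pi> \<phi>E w x))"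
  proof -
    have "complex_of_real (\<Sum>w\<in>Ck. outcome_prob U \<pi> \<phi>E \<psi> w x * pure_qfi (cond_state U \<pi> \<phi>E \<psi> w) x)
       = (\<Sum>w\<in>Ck. complex_of_real (outcome_prob U \<pi> \<phi>E \<psi> w x * pure_qfi (cond_state U \<pi> \<phi>E \<psi> w) x))"
      by (rule of_real_sum)
    also have "\<dots> = (\<Sum>w\<in>Ck. 4 * (expect \<psi> (Gop U \<pi> \<phi>E w x) - FF * expect \<psi> (Fop U \<pi> \<phi>E w x)))"
      by (rule sum.cong) (simp_all add: termw del: of_real_mult)
    also have "\<dots> = 4 * ((\<Sum>w\<in>Ck. expect \<psi> (Gop U \<pi> \<phi>E w x)) - FF * (\<Sum>w\<in>Ck. expect \<psi> (Fop U \<pi> \<phi>E w x)))"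
      by (simp add: sum_distrib_left sum_subtractf)
    finally show ?thesis by (simp add: expect_sum)
  qed
  have IQ: "complex_of_real (pure_qfi (\<lambda>t. U t *v tensor_vec \<psi> \<phi>E) x)
      = 4 * (expect \<psi> (\<Sum>v\<in>UNIV. Gop U \<pi> \<phi>E v x) - FF^2)"
  proof -
    have "pure_qfi Psi x = 4 * (norm Psi' ^2 - (Im zz)^2)"
      unfolding pure_qfi_def Let_def vector_derivative_at[OF dPsi] zz_def[symmetric]
      using Rezz by (simp add: cmod_def)
    moreover have "Psi = (\<lambda>t. U t *v tensor_vec \<psi> \<phi>E)" unfolding Psi_def v0_def ..
    ultimately show ?thesis unfolding GG FF by simp
  qed
  have splitG: "expect \<psi> (\<Sum>v\<in>UNIV. Gop U \<pi> \<phi>E v x)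
     = expect \<psi> (\<Sum>v\<in>Ck. Gop U \<pi> \<phi>E v x) + expect \<psi> (\<Sum>v\<in>-Ck. Gop U \<pi> \<phi>E v x)"
    unfolding expect_sum[OF finite] by (metis Compl_eq_Diff_UNIV add.commute finite subset_UNIV sum.subset_diff)
  have splitF: "FF = expect \<psi> (\<Sum>v\<in>Ck. Fop U \<pi> \<phi>E v x) + expect \<psi> (\<Sum>v\<in>-Ck. Fop U \<pi> \<phi>E v x)"
    unfolding FF_def expect_sum[OF finite] by (metis Compl_eq_Diff_UNIV add.commute finite subset_UNIV sum.subset_diff)
  show ?thesis
  proof (intro conjI impI)
    show "complex_of_real (\<Sum>w\<in>Ck. outcome_prob U \<pi> \<phi>E \<psi> w x * pure_qfi (cond_state U \<pi> \<phi>E \<psi> w) x)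
           = 4 * (expect \<psi> (\<Sum>w\<in>Ck. Gop U \<pi> \<phi>E w x)
                  - expect \<psi> (\<Sum>v\<in>UNIV. Fop U \<pi> \<phi>E v x) * expect \<psi> (\<Sum>w\<in>Ck. Fop U \<pi> \<phi>E w x))"
      using part1 unfolding FF_def .
    assume qpos: "pure_qfi (\<lambda>t. U t *v tensor_vec \<psi> \<phi>E) x > 0"
    define S where "S = (\<Sum>w\<in>Ck. outcome_prob U \<pi> \<phi>E \<psi> w x * pure_qfi (cond_state U \<pi> \<phi>E \<psi> w) x)"
    define Q where "Q = pure_qfi (\<lambda>t. U t *v tensor_vec \<psi> \<phi>E) x"
    define GC where "GC = expect \<psi> (\<Sum>v\<in>Ck. Gop U \<pi> \<phi>E v x)"
    define GX where "GX = expect \<psi> (\<Sum>v\<in>-Ck. Gop U \<pi> \<phi>E v x)"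
    define FC where "FC = expect \<psi> (\<Sum>v\<in>Ck. Fop U \<pi> \<phi>E v x)"
    define FX where "FX = expect \<psi> (\<Sum>v\<in>-Ck. Fop U \<pi> \<phi>E v x)"
    have e1: "complex_of_real S = 4 * (GC - FF * FC)" using part1 unfolding S_def GC_def FC_def .
    have e2: "complex_of_real Q = 4 * ((GC + GX) - FF^2)" using IQ unfolding Q_def splitG GC_def GX_def .
    have Qnz: "complex_of_real Q \<noteq> 0" using qpos unfolding Q_def by simp
    have "complex_of_real (1 - S / Q) = (GX - FF * FX) / ((GC + GX) - FF^2)"
    proof -
      have "complex_of_real (1 - S / Q) = 1 - complex_of_real S / complex_of_real Q" by simp
      also have "\<dots> = (GX - FF * FX) / ((GC + GX) - FF^2)"
      proof -
        define DD where "DD = (GC + GX) - FF^2"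
        have "4 * DD \<noteq> 0" using Qnz unfolding e2 DD_def .
        then have Dnz: "DD \<noteq> 0" by simp
        have num: "DD - (GC - FF * FC) = GX - FF * FX"
          unfolding DD_def using splitF[folded FC_def FX_def] by (simp add: algebra_simps power2_eq_square)
        have "1 - complex_of_real S / complex_of_real Q = (DD - (GC - FF * FC)) / DD"
          unfolding e1 e2 DD_def[symmetric] using Dnz by (simp add: field_simps)
        then show ?thesis unfolding num unfolding DD_def .
      qed
      finally show ?thesis .
    qed
    then show "complex_of_real (1 - S / Q) =
      (GX - expect \<psi> (\<Sum>v\<in>UNIV. Fop U \<pi> \<phi>E v x) * FX)
      / (expect \<psi> (\<Sum>v\<in>UNIV. Gop U \<pi> \<phi>E v x) - (expect \<psi> (\<Sum>v\<in>UNIV. Fop U \<pi> \<phi>E v x))^2)"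
      unfolding FF_def[symmetric] splitG GC_def[symmetric] GX_def[symmetric] .
  qed
qed

end
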